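(* Consider the following optical-network model. Each link $k$ has a set $A_k\subseteq\mathbb{Z}$ of available units. Each trait $t$ has a resource $\mathrm{RI}(t)$, a nonempty integer interval, and for each link $k$ the set $t\oplus k$ satisfies: every $t'\in t\oplus k$ has $\mathrm{RI}(t')$ a maximal integer interval contained in $\mathrm{RI}(t)\cap A_k$, and for every maximal integer interval $J\subseteq\mathrm{RI}(t)\cap A_k$ there is $t'\in t\oplus k$ with $\mathrm{RI}(t')=J$. Let $w=(n_a,n_b)$ be a search-graph vertex and $e$ an edge from $w$ to a vertex $x$ that appends a link $k$ from $n_a$ to a node $n_c\ne n_a$ to a route ending at $n_a$, so $x=(n_c,n_b)$; for a label $l=(t_1,t_2)$ at $w$ set $l\oplus e=\{(t,t_2):t\in t_1\oplus k\}$ if $n_a\ne n_b$, and $l\oplus e=\{(t,t_2):t\in t_1\oplus k\}\cup\{(t,t_1):t\in t_2\oplus k\}$ if $n_a=n_b$. Let $\mathrm{cost}$ be a real-valued function on labels such that for any labels $l_i,l_j$ at $w$: if $\mathrm{cost}(l_i)\le\mathrm{cost}(l_j)$ then $\mathrm{cost}(l')\le\mathrm{cost}(l)$ for all $l'\in l_i\oplus e$, $l\in l_j\oplus e$. Then for all labels $l_i,l_j$ at $w$: if $l_i\preceq'_w l_j$, then for every $l\in l_j\oplus e$ there exists $l'\in l_i\oplus e$ with $l'\preceq'_x l$.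
   Context: A trait describes a route in an optical network with its cost and the interval of contiguous units available along it; a label at vertex $(n,m)$ is a pair of traits of two link-disjoint routes ending at nodes $n$ and $m$. For labels at a vertex $v=(n,m)$, $\preceq'_v$ denotes $\preceq'_{\ne}$ if $n\ne m$ and $\preceq'_=$ if $n=m$, where: $(a,b)\preceq'_{\ne}(c,d)$ iff $\mathrm{cost}((a,b))\le\mathrm{cost}((c,d))$, $\mathrm{RI}(a)\supseteq\mathrm{RI}(c)$ and $\mathrm{RI}(b)\supseteq\mathrm{RI}(d)$; and $(a,b)\preceq'_=(c,d)$ iff $\mathrm{cost}((a,b))\le\mathrm{cost}((c,d))$ and either ($\mathrm{RI}(a)\supseteq\mathrm{RI}(c)$ and $\mathrm{RI}(b)\supseteq\mathrm{RI}(d)$) or ($\mathrm{RI}(a)\supseteq\mathrm{RI}(d)$ and $\mathrm{RI}(b)\supseteq\mathrm{RI}(c)$). *)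

theory Defs
  imports Complex_Main
begin

definition int_interval :: "int set \<Rightarrow> bool" where
  "int_interval J \<longleftrightarrow> (\<exists>lo hi. lo \<le> hi \<and> J = {lo..hi})"

definition max_interval_in :: "int set \<Rightarrow> int set \<Rightarrow> bool" where
  "max_interval_in J S \<longleftrightarrow> int_interval J \<and> J \<subseteq> S \<and>
     (\<forall>J'. int_interval J' \<and> J \<subseteq> J' \<and> J' \<subseteq> S \<longrightarrow> J' = J)"

definition dom_neq :: "('t \<times> 't \<Rightarrow> real) \<Rightarrow> ('t \<Rightarrow> int set) \<Rightarrow> 't \<times> 't \<Rightarrow> 't \<times> 't \<Rightarrow> bool" where
  "dom_neq cost RI l1 l2 \<longleftrightarrow> (case l1 of (a, b) \<Rightarrow> case l2 of (c, d) \<Rightarrow>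
     cost (a, b) \<le> cost (c, d) \<and> RI c \<subseteq> RI a \<and> RI d \<subseteq> RI b)"

definition dom_eq :: "('t \<times> 't \<Rightarrow> real) \<Rightarrow> ('t \<Rightarrow> int set) \<Rightarrow> 't \<times> 't \<Rightarrow> 't \<times> 't \<Rightarrow> bool" where
  "dom_eq cost RI l1 l2 \<longleftrightarrow> (case l1 of (a, b) \<Rightarrow> case l2 of (c, d) \<Rightarrow>
     cost (a, b) \<le> cost (c, d) \<and>
     ((RI c \<subseteq> RI a \<and> RI d \<subseteq> RI b) \<or> (RI d \<subseteq> RI a \<and> RI c \<subseteq> RI b)))"

definition dom_at :: "('t \<times> 't \<Rightarrow> real) \<Rightarrow> ('t \<Rightarrow> int set) \<Rightarrow> 'n \<times> 'n \<Rightarrow> 't \<times> 't \<Rightarrow> 't \<times> 't \<Rightarrow> bool" where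
  "dom_at cost RI v l1 l2 \<longleftrightarrow>
     (if fst v \<noteq> snd v then dom_neq cost RI l1 l2 else dom_eq cost RI l1 l2)"

definition label_ext :: "('t \<Rightarrow> 'k \<Rightarrow> 't set) \<Rightarrow> 'k \<Rightarrow> 'n \<times> 'n \<Rightarrow> 't \<times> 't \<Rightarrow> ('t \<times> 't) set" where
  "label_ext tplus k w l = (case w of (na, nb) \<Rightarrow> case l of (t1, t2) \<Rightarrow>
     if na \<noteq> nb then {(t, t2) | t. t \<in> tplus t1 k}
     else {(t, t2) | t. t \<in> tplus t1 k} \<union> {(t, t1) | t. t \<in> tplus t2 k})"

end

theory Submission
  imports Defs
begin

lemma exists_max_interval:
  assumes "int_interval I" "I \<subseteq> S" "S \<subseteq> {lo..hi}"
  shows "\<exists>J. max_interval_in J S \<and> I \<subseteq> J"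
proof -
  let ?P = "\<lambda>J. int_interval J \<and> I \<subseteq> J \<and> J \<subseteq> S"
  have "?P I" using assms by auto
  moreover have "\<forall>J. ?P J \<longrightarrow> card J < card {lo..hi} + 1"
  proof (intro allI impI)
    fix J assume "?P J"
    then have "J \<subseteq> {lo..hi}" using assms by auto
    then have "card J \<le> card {lo..hi}" by (intro card_mono) auto
    then show "card J < card {lo..hi} + 1" by simp
  qed
  ultimately obtain J where J: "?P J" and mx: "\<forall>J'. ?P J' \<longrightarrow> card J' \<le> card J"
    using ex_has_greatest_nat[of ?P I card "card {lo..hi} + 1"] by blast
  have "max_interval_in J S"
    unfolding max_interval_in_def
  proof (intro conjI allI impI)
    fix J' assume h: "int_interval J' \<and> J \<subseteq> J' \<and> J' \<subseteq> S"
    then have "?P J'" using J by auto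
    then have "card J' \<le> card J" using mx by blast
    moreover have "finite J'" using h unfolding int_interval_def by auto
    ultimately show "J' = J" using h card_seteq[of J' J] by auto
  qed (use J in auto)
  then show ?thesis using J by blast
qed

theorem proposition7:
  fixes A :: "'k \<Rightarrow> int set"
    and RI :: "'t \<Rightarrow> int set"
    and tplus :: "'t \<Rightarrow> 'k \<Rightarrow> 't set"
    and cost :: "'t \<times> 't \<Rightarrow> real"
    and na nb nc :: 'n
    and k :: 'k
    and Lw :: "('t \<times> 't) set"
  assumes RI_interval: "\<And>t. int_interval (RI t)"
    and tplus_sound: "\<And>t k t'. t' \<in> tplus t k \<Longrightarrow> max_interval_in (RI t') (RI t \<inter> A k)"
    and tplus_complete: "\<And>t k J. max_interval_in J (RI t \<inter> A k) \<Longrightarrow> \<exists>t' \<in> tplus t k. RI t' = J"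
    and nc_ne: "nc \<noteq> na"
    and cost_mono: "\<And>li lj l' l. li \<in> Lw \<Longrightarrow> lj \<in> Lw \<Longrightarrow> cost li \<le> cost lj \<Longrightarrow>
        l' \<in> label_ext tplus k (na, nb) li \<Longrightarrow> l \<in> label_ext tplus k (na, nb) lj \<Longrightarrow> cost l' \<le> cost l"
  shows "\<forall>li \<in> Lw. \<forall>lj \<in> Lw. dom_at cost RI (na, nb) li lj \<longrightarrow>
           (\<forall>l \<in> label_ext tplus k (na, nb) lj. \<exists>l' \<in> label_ext tplus k (na, nb) li.
              dom_at cost RI (nc, nb) l' l)"
proof -
  have key: "\<exists>t' \<in> tplus a k. RI t \<subseteq> RI t'" if "RI c \<subseteq> RI a" "t \<in> tplus c k" for a c t
  proof -
    have m: "max_interval_in (RI t) (RI c \<inter> A k)" using tplus_sound that(2) by blast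
    obtain lo hi where "RI a = {lo..hi}" using RI_interval[of a] unfolding int_interval_def by blast
    have sub: "RI t \<subseteq> RI a \<inter> A k" using m that(1) unfolding max_interval_in_def by auto
    have sub2: "RI a \<inter> A k \<subseteq> {lo..hi}" using \<open>RI a = {lo..hi}\<close> by auto
    obtain J where J: "max_interval_in J (RI a \<inter> A k)" "RI t \<subseteq> J"
      using exists_max_interval[OF RI_interval[of t] sub sub2] by blast
    then show ?thesis using tplus_complete[OF J(1)] by blast
  qed
  have neq_eq: "dom_neq cost RI l1 l2 \<Longrightarrow> dom_at cost RI v l1 l2" for l1 l2 and v :: "'n \<times> 'n"
    unfolding dom_at_def dom_neq_def dom_eq_def by (auto split: prod.splits)
  show ?thesis
  proof (intro ballI impI)
    fix li lj l
    assume li: "li \<in> Lw" and lj: "lj \<in> Lw" and d: "dom_at cost RI (na, nb) li lj"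
      and l: "l \<in> label_ext tplus k (na, nb) lj"
    obtain a b where ab: "li = (a, b)" by (cases li)
    obtain c e where ce: "lj = (c, e)" by (cases lj)
    have cst: "cost li \<le> cost lj" using d unfolding dom_at_def dom_neq_def dom_eq_def ab ce
      by (auto split: if_splits)
    have cm: "cost l' \<le> cost l" if "l' \<in> label_ext tplus k (na, nb) li" for l'
      using cost_mono[OF li lj cst that l] .
    show "\<exists>l' \<in> label_ext tplus k (na, nb) li. dom_at cost RI (nc, nb) l' l"
    proof (cases "na = nb")
      case False
      then have s: "RI c \<subseteq> RI a" "RI e \<subseteq> RI b"
        using d unfolding dom_at_def dom_neq_def ab ce by auto
      from l False obtain t where t: "t \<in> tplus c k" "l = (t, e)"
        unfolding label_ext_def ce by auto
      obtain t' where t': "t' \<in> tplus a k" "RI t \<subseteq> RI t'" using key[OF s(1) t(1)] by blast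
      have mem: "(t', b) \<in> label_ext tplus k (na, nb) li" using False t' unfolding label_ext_def ab by auto
      have "dom_neq cost RI (t', b) l"
        using cm[OF mem] t t' s unfolding dom_neq_def by auto
      then show ?thesis using mem neq_eq by blast
    next
      case True
      have tgt: "dom_at cost RI (nc, nb) l1 l2 = dom_neq cost RI l1 l2" for l1 l2
        using True nc_ne unfolding dom_at_def by auto
      have s: "(RI c \<subseteq> RI a \<and> RI e \<subseteq> RI b) \<or> (RI e \<subseteq> RI a \<and> RI c \<subseteq> RI b)"
        using d True unfolding dom_at_def dom_eq_def ab ce by auto
      have ext: "label_ext tplus k (na, nb) li = {(t, b) | t. t \<in> tplus a k} \<union> {(t, a) | t. t \<in> tplus b k}"
        using True unfolding label_ext_def ab by auto
      from l True consider (L) t where "t \<in> tplus c k" "l = (t, e)"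
        | (R) t where "t \<in> tplus e k" "l = (t, c)"
        unfolding label_ext_def ce by auto
      then show ?thesis
      proof cases
        case L
        show ?thesis using s
        proof
          assume s1: "RI c \<subseteq> RI a \<and> RI e \<subseteq> RI b"
          obtain t' where t': "t' \<in> tplus a k" "RI t \<subseteq> RI t'" using key[of c a t] s1 L by blast
          have mem: "(t', b) \<in> label_ext tplus k (na, nb) li" using ext t' by auto
          show ?thesis using mem cm[OF mem] L t' s1 unfolding tgt dom_neq_def by auto
        next
          assume s1: "RI e \<subseteq> RI a \<and> RI c \<subseteq> RI b"
          obtain t' where t': "t' \<in> tplus b k" "RI t \<subseteq> RI t'" using key[of c b t] s1 L by blast
          have mem: "(t', a) \<in> label_ext tplus k (na, nb) li" using ext t' by auto
          show ?thesis using mem cm[OF mem] L t' s1 unfolding tgt dom_neq_def by auto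
        qed
      next
        case R
        show ?thesis using s
        proof
          assume s1: "RI c \<subseteq> RI a \<and> RI e \<subseteq> RI b"
          obtain t' where t': "t' \<in> tplus b k" "RI t \<subseteq> RI t'" using key[of e b t] s1 R by blast
          have mem: "(t', a) \<in> label_ext tplus k (na, nb) li" using ext t' by auto
          show ?thesis using mem cm[OF mem] R t' s1 unfolding tgt dom_neq_def by auto
        next
          assume s1: "RI e \<subseteq> RI a \<and> RI c \<subseteq> RI b"
          obtain t' where t': "t' \<in> tplus a k" "RI t \<subseteq> RI t'" using key[of e a t] s1 R by blast
          have mem: "(t', b) \<in> label_ext tplus k (na, nb) li" using ext t' by auto
          show ?thesis using mem cm[OF mem] R t' s1 unfolding tgt dom_neq_def by auto
        qed
      qed
    qed
  qed
qed

end
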